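(* Let $p=(p_1,p_2,\dots)$ be a probability distribution on the positive integers with infinite support, and let integers $n \geq 0$ and $k \geq 1$ be given. Throw $n$ balls independently into countably many bins indexed by positive integers, each ball landing in bin $i$ with probability $p_i$, and let $M_n$ be the maximum load of any bin. Let $\|p\|_k = \left(\sum_{i=1}^\infty p_i^k\right)^{1/k}$. Then \[ \Pr[\mathrm{Bin}(n, \|p\|_k) \geq k] \;\leq\; \Pr[M_n \geq k] \;\leq\; \binom{n}{k}\|p\|_k^{k}. \]
   Context: $\mathrm{Bin}(n,\alpha)$ denotes a binomial random variable with $n$ trials and success probability $\alpha$. The load of a bin is the number of balls that landed in it. *)

theory Defs
  imports "HOL-Probability.Probability"
begin

text \<open>Load of bin i after the balls described by the list xs (xs ! j = bin of ball j).\<close>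
definition load :: "nat list \<Rightarrow> nat \<Rightarrow> nat" where
  "load xs i = length (filter (\<lambda>x. x = i) xs)"

definition max_load :: "nat list \<Rightarrow> nat" where
  "max_load xs = Max (insert 0 (load xs ` set xs))"

definition pnorm :: "nat pmf \<Rightarrow> nat \<Rightarrow> real" where
  "pnorm p k = (\<Sum>i. pmf p i ^ k) powr (1 / real k)"

end

theory Submission
  imports Defs "HOL-Computational_Algebra.Formal_Power_Series"
begin

lemma prob_replicate_Suc:
  "measure_pmf.prob (replicate_pmf (Suc n) p) S =
   measure_pmf.expectation p (\<lambda>x. measure_pmf.prob (replicate_pmf n p) {xs. x#xs \<in> S})"
proof -
  have "replicate_pmf (Suc n) p = bind_pmf p (\<lambda>x. map_pmf (Cons x) (replicate_pmf n p))"
    by (simp add: map_pmf_def)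
  then have "measure_pmf.prob (replicate_pmf (Suc n) p) S =
     measure (measure_pmf p \<bind> (\<lambda>x. measure_pmf (map_pmf (Cons x) (replicate_pmf n p)))) S"
    by (simp add: measure_pmf_bind)
  also have "\<dots> = \<integral>x. measure (measure_pmf (map_pmf (Cons x) (replicate_pmf n p))) S \<partial>measure_pmf p"
    by (rule measure_pmf.measure_bind[where N="count_space UNIV"]) (auto simp: measurable_measure_pmf measure_pmf_in_subprob_algebra)
  also have "\<dots> = measure_pmf.expectation p (\<lambda>x. measure_pmf.prob (replicate_pmf n p) {xs. x#xs \<in> S})"
    by (simp add: vimage_def)
  finally show ?thesis .
qed

definition tr :: "nat \<Rightarrow> real \<Rightarrow> real fps" where
  "tr t x = Abs_fps (\<lambda>l. if l < t then x^l / fact l else 0)"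

lemma tr_nth[simp]: "fps_nth (tr t x) l = (if l < t then x^l / fact l else 0)"
  by (simp add: tr_def)

lemma tr_deriv: "fps_deriv (tr t x) = fps_const x * tr (t - 1) x"
proof (rule fps_ext)
  fix n
  show "fps_nth (fps_deriv (tr t x)) n = fps_nth (fps_const x * tr (t - 1) x) n"
  proof (cases "Suc n < t")
    case True
    have "real (Suc n) * (x^(Suc n)/fact (Suc n)) = x * (x^n/fact n)"
      by (simp add: fact_Suc field_simps del: of_nat_Suc)
    then show ?thesis using True by simp
  qed simp
qed

definition G :: "(nat \<Rightarrow> real) \<Rightarrow> nat \<Rightarrow> (nat \<Rightarrow> nat) \<Rightarrow> real \<Rightarrow> real fps" where
  "G a N t d = (\<Prod>i<N. tr (t i) (a i)) * fps_exp d"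

lemma G_cong: "(\<And>i. i < N \<Longrightarrow> t i = t' i) \<Longrightarrow> G a N t d = G a N t' d"
proof -
  assume h: "\<And>i. i < N \<Longrightarrow> t i = t' i"
  have "(\<Prod>i<N. tr (t i) (a i)) = (\<Prod>i<N. tr (t' i) (a i))" by (rule prod.cong) (auto simp: h)
  then show ?thesis by (simp add: G_def)
qed

lemma G_Suc: "G a (Suc N) t d = tr (t N) (a N) * G a N t d"
  unfolding G_def by (simp add: mult_ac)

lemma ring_aux: "(c1::'a::comm_ring) * t1 * g + t * (cd * g + S) = cd * (t * g) + (t * S + c1 * (t1 * g))"
  by (simp add: algebra_simps)

lemma G_deriv: "fps_deriv (G a N t d) = fps_const d * G a N t d
   + (\<Sum>j<N. fps_const (a j) * G a N (t(j := t j - 1)) d)"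
proof (induction N arbitrary: t)
  case 0
  then show ?case by (simp add: G_def)
next
  case (Suc N)
  have e1: "G a N (t(N := t N - 1)) d = G a N t d" by (rule G_cong) auto
  have e2: "\<And>j. j < N \<Longrightarrow> G a (Suc N) (t(j := t j - 1)) d = tr (t N) (a N) * G a N (t(j := t j - 1)) d"
    by (simp add: G_Suc)
  have e3: "(\<Sum>j<N. fps_const (a j) * G a (Suc N) (t(j := t j - 1)) d) =
     tr (t N) (a N) * (\<Sum>j<N. fps_const (a j) * G a N (t(j := t j - 1)) d)"
    unfolding sum_distrib_left by (rule sum.cong) (auto simp only: e2 lessThan_iff mult_ac)
  have e4: "G a (Suc N) (t(N := t N - 1)) d = tr (t N - 1) (a N) * G a N t d"
    by (simp only: G_Suc e1) simp
  have "fps_deriv (G a (Suc N) t d) = fps_deriv (tr (t N) (a N)) * G a N t d + tr (t N) (a N) * fps_deriv (G a N t d)"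
    unfolding G_Suc fps_deriv_mult by (rule add.commute)
  also have "\<dots> = fps_const (a N) * tr (t N - 1) (a N) * G a N t d
     + tr (t N) (a N) * (fps_const d * G a N t d + (\<Sum>j<N. fps_const (a j) * G a N (t(j := t j - 1)) d))"
    by (simp only: tr_deriv Suc.IH)
  also have "\<dots> = fps_const d * G a (Suc N) t d
     + ((\<Sum>j<N. fps_const (a j) * G a (Suc N) (t(j := t j - 1)) d) + fps_const (a N) * G a (Suc N) (t(N := t N - 1)) d)"
    unfolding e3 e4 unfolding G_Suc by (rule ring_aux)
  finally show ?case by (simp only: sum.lessThan_Suc)
qed

lemma expect_split:
  fixes f :: "nat \<Rightarrow> real"
  assumes fc: "\<And>x. x \<ge> N \<Longrightarrow> f x = c"
  shows "measure_pmf.expectation p f = (\<Sum>j<N. pmf p j * f j) + (1 - (\<Sum>j<N. pmf p j)) * c"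
proof -
  define g where "g x = f x - c" for x
  have g0: "\<And>x. x \<ge> N \<Longrightarrow> g x = 0" by (simp add: g_def fc)
  have gint: "integrable (measure_pmf p) g"
  proof (rule measure_pmf.integrable_const_bound[where B="\<Sum>j<N. \<bar>g j\<bar>"])
    show "AE x in measure_pmf p. norm (g x) \<le> (\<Sum>j<N. \<bar>g j\<bar>)"
    proof (rule AE_I2)
      fix x
      show "norm (g x) \<le> (\<Sum>j<N. \<bar>g j\<bar>)"
      proof (cases "x < N")
        case True
        then show ?thesis using member_le_sum[of x "{..<N}" "\<lambda>j. \<bar>g j\<bar>"] by auto
      next
        case False
        then show ?thesis using g0[of x] by (simp add: sum_nonneg)
      qed
    qed
  qed simp
  have ig: "measure_pmf.expectation p g = (\<Sum>a<N. g a * pmf p a)"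
    by (rule integral_measure_pmf_real) (auto intro: ccontr simp: g0 not_less[symmetric])
  have "measure_pmf.expectation p f = measure_pmf.expectation p (\<lambda>x. g x + c)"
    by (simp add: g_def)
  also have "\<dots> = measure_pmf.expectation p g + c"
    using gint by (simp add: integral_add)
  also have "\<dots> = (\<Sum>j<N. pmf p j * f j) + (1 - (\<Sum>j<N. pmf p j)) * c"
    by (simp add: ig g_def algebra_simps sum_subtractf sum_distrib_left sum_distrib_right)
  finally show ?thesis .
qed

lemma load_Cons: "load (x # xs) i = load xs i + (if x = i then 1 else 0)"
  by (simp add: load_def)

lemma G_nth0: "fps_nth (G a N t d) 0 = (if \<forall>i<N. 0 < t i then 1 else 0)"
proof (induction N)
  case 0
  then show ?case by (simp add: G_def)
next
  case (Suc N)
  then show ?case by (auto simp: G_Suc less_Suc_eq)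
qed

lemma prob_G:
  "measure_pmf.prob (replicate_pmf n p) {xs. \<forall>i<N. load xs i < t i}
     = fact n * fps_nth (G (pmf p) N t (1 - (\<Sum>i<N. pmf p i))) n"
proof (induction n arbitrary: t)
  case 0
  show ?case by (simp add: G_nth0 load_def indicator_def)
next
  case (Suc n)
  define d where "d = 1 - (\<Sum>i<N. pmf p i)"
  have set_eq: "{xs. x # xs \<in> {xs. \<forall>i<N. load xs i < t i}} = {xs. \<forall>i<N. load xs i < (t(x := t x - 1)) i}" for x
    by (auto simp: load_Cons split: if_splits)
  have "measure_pmf.prob (replicate_pmf (Suc n) p) {xs. \<forall>i<N. load xs i < t i}
     = measure_pmf.expectation p (\<lambda>x. fact n * fps_nth (G (pmf p) N (t(x := t x - 1)) d) n)"
    unfolding prob_replicate_Suc set_eq Suc.IH d_def ..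
  also have "\<dots> = (\<Sum>j<N. pmf p j * (fact n * fps_nth (G (pmf p) N (t(j := t j - 1)) d) n))
      + d * (fact n * fps_nth (G (pmf p) N t d) n)"
  proof (subst expect_split[where N=N and c="fact n * fps_nth (G (pmf p) N t d) n"])
    fix x assume "N \<le> x"
    then have "G (pmf p) N (t(x := t x - 1)) d = G (pmf p) N t d" by (intro G_cong) auto
    then show "fact n * fps_nth (G (pmf p) N (t(x := t x - 1)) d) n = fact n * fps_nth (G (pmf p) N t d) n" by simp
  qed (simp add: d_def)
  also have "\<dots> = fact n * fps_nth (fps_deriv (G (pmf p) N t d)) n"
    unfolding G_deriv by (simp add: fps_sum_nth algebra_simps sum_distrib_left)
  also have "\<dots> = fact (Suc n) * fps_nth (G (pmf p) N t d) (Suc n)"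
    by (simp add: fact_Suc)
  finally show ?case by (simp add: d_def)
qed

definition up :: "nat \<Rightarrow> real \<Rightarrow> real \<Rightarrow> nat \<Rightarrow> real" where
  "up k x y m = (\<Sum>l\<le>m. if k \<le> l then real (m choose l) * x^l * y^(m-l) else 0)"

lemma up_0: "k \<ge> 1 \<Longrightarrow> up k x y 0 = 0"
  by (simp add: up_def)

lemma up_Suc:
  assumes k: "k \<ge> 1"
  shows "up k x y (Suc m) = (x + y) * up k x y m + real (m choose (k - 1)) * x^k * y^(Suc m - k)"
proof -
  obtain j0 where kj: "k = Suc j0" using k by (cases k) auto
  define g where "g j = (if k \<le> j then real (m choose j) * x^j * y^(Suc m - j) else 0)" for j
  define h where "h l = (if k \<le> Suc l then real (m choose l) * x^Suc l * y^(m - l) else 0)" for l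
  have "up k x y (Suc m) = (\<Sum>l\<le>m. h l + g (Suc l))"
    unfolding up_def sum.atMost_Suc_shift using k
    by (simp add: h_def g_def) (rule sum.cong, auto simp: distrib_right)
  also have "\<dots> = (\<Sum>l\<le>m. h l) + (\<Sum>l\<le>m. g (Suc l))"
    by (rule sum.distrib)
  also have "(\<Sum>l\<le>m. g (Suc l)) = y * up k x y m"
  proof -
    have "(\<Sum>l\<le>m. g (Suc l)) + g 0 = (\<Sum>l\<le>Suc m. g l)"
      by (simp only: sum.atMost_Suc_shift add.commute)
    also have "\<dots> = (\<Sum>l\<le>m. g l)" by (simp add: g_def)
    also have "\<dots> = y * up k x y m"
      unfolding up_def sum_distrib_left
      by (rule sum.cong) (auto simp: g_def Suc_diff_le)
    finally show ?thesis using k by (simp add: g_def)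
  qed
  also have "(\<Sum>l\<le>m. h l) = x * up k x y m + real (m choose (k - 1)) * x^k * y^(Suc m - k)"
  proof -
    have "(\<Sum>l\<le>m. h l) = (\<Sum>l\<le>m. x * (if k \<le> l then real (m choose l) * x^l * y^(m-l) else 0))
       + (\<Sum>l\<le>m. if l = k - 1 then real (m choose l) * x^Suc l * y^(m - l) else 0)"
      unfolding sum.distrib[symmetric] by (rule sum.cong) (use k in \<open>auto simp: h_def kj\<close>)
    also have "(\<Sum>l\<le>m. if l = k - 1 then real (m choose l) * x^Suc l * y^(m - l) else 0)
       = real (m choose (k - 1)) * x^k * y^(Suc m - k)"
    proof (cases "k - 1 \<le> m")
      case True
      then show ?thesis using kj by simp
    next
      case False
      then show ?thesis by simp
    qed
    finally show ?thesis by (simp add: up_def sum_distrib_left)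
  qed
  finally show ?thesis by (simp add: algebra_simps)
qed

lemma up_mono:
  assumes k: "k \<ge> 1" and xy: "0 \<le> x" "x \<le> y" "y \<le> s"
  shows "x^k * up k y (s - y) m \<le> y^k * up k x (s - x) m"
proof (induction m)
  case 0
  then show ?case using k by (simp add: up_0)
next
  case (Suc m)
  have s0: "0 \<le> s" using xy by linarith
  have "x^k * up k y (s - y) (Suc m) = s * (x^k * up k y (s - y) m) + real (m choose (k - 1)) * x^k * y^k * (s - y)^(Suc m - k)"
    using k by (simp add: up_Suc algebra_simps)
  also have "\<dots> \<le> s * (y^k * up k x (s - x) m) + real (m choose (k - 1)) * x^k * y^k * (s - x)^(Suc m - k)"
  proof (rule add_mono)
    show "s * (x^k * up k y (s - y) m) \<le> s * (y^k * up k x (s - x) m)"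
      using Suc.IH s0 by (rule mult_left_mono)
    have "(s - y)^(Suc m - k) \<le> (s - x)^(Suc m - k)"
      using xy by (intro power_mono) auto
    moreover have "0 \<le> real (m choose (k - 1)) * x^k * y^k" using xy by simp
    ultimately show "real (m choose (k - 1)) * x^k * y^k * (s - y)^(Suc m - k) \<le> real (m choose (k - 1)) * x^k * y^k * (s - x)^(Suc m - k)"
      by (rule mult_left_mono)
  qed
  also have "\<dots> = y^k * up k x (s - x) (Suc m)"
    using k by (simp add: up_Suc algebra_simps)
  finally show ?case .
qed


lemma conv_fact:
  fixes X Y :: "real fps"
  shows "fact m * fps_nth (X * Y) m = (\<Sum>l\<le>m. real (m choose l) * (fact l * fps_nth X l) * (fact (m-l) * fps_nth Y (m-l)))"
proof -
  have "fact m * fps_nth (X * Y) m = (\<Sum>l\<le>m. fact m * (fps_nth X l * fps_nth Y (m-l)))"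
    by (simp add: fps_mult_nth atLeast0AtMost sum_distrib_left)
  also have "\<dots> = (\<Sum>l\<le>m. real (m choose l) * (fact l * fps_nth X l) * (fact (m-l) * fps_nth Y (m-l)))"
  proof (rule sum.cong)
    fix l assume "l \<in> {..m}"
    then have "fact l * fact (m - l) * (m choose l) = (fact m :: nat)" by (simp add: binomial_fact_lemma)
    then have "fact l * fact (m - l) * real (m choose l) = (fact m :: real)"
      by (metis of_nat_fact of_nat_mult)
    then show "fact m * (fps_nth X l * fps_nth Y (m-l)) = real (m choose l) * (fact l * fps_nth X l) * (fact (m-l) * fps_nth Y (m-l))"
      by (metis (no_types, lifting) mult.assoc mult.commute mult.left_commute)
  qed simp
  finally show ?thesis .
qed

lemma tr_fact: "fact l * fps_nth (tr k x) l = (if l < k then x^l else 0)"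
  by simp

lemma exp_fact: "fact l * fps_nth (fps_exp e) l = (e::real)^l"
  by simp

lemma lower_eq: "(\<Sum>l\<le>m. real (m choose l) * (if l < k then x^l else 0) * y^(m-l)) = (x + y)^m - up k x y m"
proof -
  have "(x + y)^m = (\<Sum>l\<le>m. real (m choose l) * x^l * y^(m-l))"
    by (simp add: binomial_ring)
  then have "(x + y)^m - up k x y m = (\<Sum>l\<le>m. real (m choose l) * x^l * y^(m-l) - (if k \<le> l then real (m choose l) * x^l * y^(m-l) else 0))"
    by (simp add: up_def sum_subtractf)
  also have "\<dots> = (\<Sum>l\<le>m. real (m choose l) * (if l < k then x^l else 0) * y^(m-l))"
    by (rule sum.cong) auto
  finally show ?thesis by simp
qed

lemma pow_add_le:
  assumes "0 \<le> a" "0 \<le> (b::real)" "k \<ge> 1"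
  shows "a^k + b^k \<le> (a + b)^k"
proof -
  obtain j where kj: "k = Suc j" using assms by (cases k) auto
  have "a^j \<le> (a+b)^j" "b^j \<le> (a+b)^j" using assms by (auto intro: power_mono)
  then have "a * a^j + b * b^j \<le> a * (a+b)^j + b * (a+b)^j"
    using assms by (intro add_mono mult_left_mono) auto
  then show ?thesis by (simp add: kj algebra_simps)
qed

lemma pow_le_base: "a^k \<le> b^k \<Longrightarrow> 0 \<le> (b::real) \<Longrightarrow> k \<ge> 1 \<Longrightarrow> a \<le> b"
  by (cases k) (auto intro: power_le_imp_le_base)

lemma up_zero: "k \<ge> 1 \<Longrightarrow> up k 0 0 m = 0"
  unfolding up_def by (rule sum.neutral) (auto simp: power_0_left)

lemma core:
  assumes k: "k \<ge> 1" and a: "0 \<le> a" and b: "0 \<le> b" and c: "c = root k (a^k + b^k)"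
  shows "fps_nth (tr k a * tr k b) m \<le> fps_nth (tr k c * fps_exp (a + b - c)) m"
proof -
  define s where "s = a + b"
  have k0: "0 < k" using k by simp
  have ab0: "0 \<le> a^k + b^k" using a b by simp
  have c0: "0 \<le> c" using c ab0 by (simp add: real_root_ge_zero)
  have ck: "c^k = a^k + b^k" using c a b k0 by simp
  have ac: "a \<le> c" by (rule pow_le_base[OF _ c0 k]) (use ck b in simp)
  have bc: "b \<le> c" by (rule pow_le_base[OF _ c0 k]) (use ck a in simp)
  have cs: "c \<le> s" by (rule pow_le_base[OF _ _ k]) (use ck pow_add_le[OF a b k] a b in \<open>auto simp: s_def\<close>)
  have R: "fact m * fps_nth (tr k c * fps_exp (a + b - c)) m = (\<Sum>l\<le>m. real (m choose l) * (if l < k then c^l else 0) * (s - c)^(m-l))"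
    unfolding conv_fact tr_fact exp_fact s_def ..
  have L: "fact m * fps_nth (tr k a * tr k b) m = (\<Sum>l\<le>m. real (m choose l) * (if l < k then a^l else 0) * (if m - l < k then b^(m-l) else 0))"
    unfolding conv_fact tr_fact ..
  have "fact m * fps_nth (tr k a * tr k b) m \<le> fact m * fps_nth (tr k c * fps_exp (a + b - c)) m"
  proof (cases "2 * k \<le> Suc m")
    case True
    have "fact m * fps_nth (tr k a * tr k b) m = 0"
      unfolding L by (rule sum.neutral) (use True in auto)
    also have "0 \<le> fact m * fps_nth (tr k c * fps_exp (a + b - c)) m"
      unfolding R using c0 cs by (intro sum_nonneg) auto
    finally show ?thesis .
  next
    case False
    have "fact m * fps_nth (tr k a * tr k b) m = (\<Sum>l\<le>m. real (m choose l) * a^l * b^(m-l)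
        - (if k \<le> l then real (m choose l) * a^l * b^(m-l) else 0)
        - (if k \<le> m - l then real (m choose l) * a^l * b^(m-l) else 0))"
      unfolding L by (rule sum.cong) (use False in auto)
    also have "\<dots> = s^m - up k a b m - (\<Sum>l\<le>m. if k \<le> m - l then real (m choose l) * a^l * b^(m-l) else 0)"
      by (simp add: sum_subtractf up_def binomial_ring s_def)
    also have "(\<Sum>l\<le>m. if k \<le> m - l then real (m choose l) * a^l * b^(m-l) else 0) = up k b a m"
    proof -
      have "(\<Sum>l\<le>m. if k \<le> m - l then real (m choose l) * a^l * b^(m-l) else 0)
          = (\<Sum>l\<in>{0..m}. if k \<le> m - (m + 0 - l) then real (m choose (m + 0 - l)) * a^(m + 0 - l) * b^(m-(m + 0 - l)) else 0)"
        by (simp only: atLeast0AtMost[symmetric] sum.atLeastAtMost_rev[where g="\<lambda>l. if k \<le> m - l then real (m choose l) * a^l * b^(m-l) else 0"])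
      also have "\<dots> = up k b a m"
        unfolding up_def atLeast0AtMost
        by (rule sum.cong) (auto simp: binomial_symmetric[symmetric] mult_ac)
      finally show ?thesis .
    qed
    finally have Lq: "fact m * fps_nth (tr k a * tr k b) m = s^m - up k a b m - up k b a m" .
    have Rq: "fact m * fps_nth (tr k c * fps_exp (a + b - c)) m = s^m - up k c (s - c) m"
      unfolding R lower_eq by simp
    have "up k c (s - c) m \<le> up k a b m + up k b a m"
    proof (cases "c = 0")
      case True
      then have "a = 0" "b = 0" using ac bc a b by auto
      then show ?thesis using True k by (simp add: up_zero s_def)
    next
      case False
      then have cpos: "0 < c^k" using c0 by simp
      have "a^k * up k c (s - c) m \<le> c^k * up k a (s - a) m"
        by (rule up_mono[OF k a ac cs])
      moreover have "b^k * up k c (s - c) m \<le> c^k * up k b (s - b) m"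
        by (rule up_mono[OF k b bc cs])
      ultimately have "c^k * up k c (s - c) m \<le> c^k * (up k a b m + up k b a m)"
        unfolding ck by (simp add: s_def algebra_simps)
      then show ?thesis using cpos by simp
    qed
    then show ?thesis unfolding Lq Rq by simp
  qed
  then show ?thesis by simp
qed

lemma tr_0: "k \<ge> 1 \<Longrightarrow> tr k 0 = 1"
  by (rule fps_ext) (auto simp: power_0_left)

lemma mult_mono_coef:
  fixes A B C :: "real fps"
  assumes "\<And>n. fps_nth A n \<le> fps_nth B n" "\<And>n. 0 \<le> fps_nth C n"
  shows "fps_nth (A * C) n \<le> fps_nth (B * C) n"
  unfolding fps_mult_nth by (intro sum_mono mult_right_mono assms)

lemma root_sum_Suc:
  fixes N :: nat
  assumes k: "k \<ge> 1" and a: "\<And>i. 0 \<le> a i"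
  shows "root k (\<Sum>i<Suc N. a i ^ k) = root k (a N ^ k + (root k (\<Sum>i<N. a i ^ k))^k)"
proof -
  have "0 \<le> (\<Sum>i<N. a i ^ k)" using a by (intro sum_nonneg) simp
  then have "(root k (\<Sum>i<N. a i ^ k))^k = (\<Sum>i<N. a i ^ k)" using k by simp
  then show ?thesis by (simp add: add.commute)
qed

lemma root_le_sum:
  fixes N :: nat
  assumes k: "k \<ge> 1" and a: "\<And>i. 0 \<le> a i"
  shows "root k (\<Sum>i<N. a i ^ k) \<le> (\<Sum>i<N. a i)"
proof (induction N)
  case 0
  then show ?case by simp
next
  case (Suc N)
  define c where "c = root k (\<Sum>i<N. a i ^ k)"
  have s0: "0 \<le> (\<Sum>i<N. a i ^ k)" using a by (intro sum_nonneg) simp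
  have c0: "0 \<le> c" using s0 by (simp add: c_def real_root_ge_zero)
  have X0: "0 \<le> a N ^ k + c^k" using a c0 by simp
  have "root k (a N ^ k + c^k) \<le> a N + c"
  proof (rule pow_le_base[OF _ _ k])
    show "root k (a N ^ k + c ^ k) ^ k \<le> (a N + c) ^ k"
      using X0 k pow_add_le[OF a c0 k] by simp
  qed (use a c0 in simp)
  also have "\<dots> \<le> a N + (\<Sum>i<N. a i)" using Suc.IH by (simp add: c_def)
  finally show ?case using root_sum_Suc[where k=k and a=a and N=N, OF k a] by (simp add: c_def add.commute)
qed

lemma merge:
  assumes k: "k \<ge> 1" and a: "\<And>i. 0 \<le> a i" and d: "0 \<le> d"
  shows "fps_nth (G a N (\<lambda>_. k) d) n \<le>
    fps_nth (tr k (root k (\<Sum>i<N. a i ^ k)) * fps_exp (d + (\<Sum>i<N. a i) - root k (\<Sum>i<N. a i ^ k))) n"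
proof (induction N arbitrary: n)
  case 0
  then show ?case using k by (simp add: G_def tr_0)
next
  case (Suc N)
  define c where "c = root k (\<Sum>i<N. a i ^ k)"
  define c' where "c' = root k (\<Sum>i<Suc N. a i ^ k)"
  define e where "e = d + (\<Sum>i<N. a i) - c"
  have e0: "0 \<le> e" using root_le_sum[where k=k and a=a and N=N, OF k a] d by (simp add: e_def c_def)
  have c0: "0 \<le> c" using a by (simp add: c_def real_root_ge_zero sum_nonneg)
  have c': "c' = root k (a N ^ k + c ^ k)" using root_sum_Suc[where k=k and a=a and N=N, OF k a] by (simp add: c_def c'_def)
  have trpos: "\<And>n. 0 \<le> fps_nth (tr k x) n" if "0 \<le> x" for x using that by simp
  have exppos: "\<And>n. 0 \<le> fps_nth (fps_exp e) n" using e0 by simp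
  have "fps_nth (G a (Suc N) (\<lambda>_. k) d) n = fps_nth (G a N (\<lambda>_. k) d * tr k (a N)) n"
    by (simp add: G_Suc mult.commute)
  also have "\<dots> \<le> fps_nth ((tr k c * fps_exp e) * tr k (a N)) n"
    by (rule mult_mono_coef) (use Suc.IH a in \<open>simp_all add: c_def e_def\<close>)
  also have "(tr k c * fps_exp e) * tr k (a N) = (tr k (a N) * tr k c) * fps_exp e"
    by (simp add: mult_ac)
  also have "fps_nth \<dots> n \<le> fps_nth ((tr k c' * fps_exp (a N + c - c')) * fps_exp e) n"
    by (rule mult_mono_coef[OF core[OF k a c0 c'] exppos])
  also have "(tr k c' * fps_exp (a N + c - c')) * fps_exp e = tr k c' * fps_exp (d + (\<Sum>i<Suc N. a i) - c')"
    by (simp add: mult.assoc fps_exp_add_mult[symmetric] e_def algebra_simps)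
  finally show ?case by (simp add: c'_def)
qed

lemma expect_fin:
  fixes f :: "nat \<Rightarrow> real"
  assumes F: "finite F" and fc: "\<And>x. x \<notin> F \<Longrightarrow> f x = c"
  shows "measure_pmf.expectation p f = (\<Sum>j\<in>F. pmf p j * f j) + (1 - (\<Sum>j\<in>F. pmf p j)) * c"
proof -
  define g where "g x = f x - c" for x
  have g0: "\<And>x. x \<notin> F \<Longrightarrow> g x = 0" by (simp add: g_def fc)
  have gint: "integrable (measure_pmf p) g"
  proof (rule measure_pmf.integrable_const_bound[where B="\<Sum>j\<in>F. \<bar>g j\<bar>"])
    show "AE x in measure_pmf p. norm (g x) \<le> (\<Sum>j\<in>F. \<bar>g j\<bar>)"
    proof (rule AE_I2)
      fix x
      show "norm (g x) \<le> (\<Sum>j\<in>F. \<bar>g j\<bar>)"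
      proof (cases "x \<in> F")
        case True
        then show ?thesis using member_le_sum[of x F "\<lambda>j. \<bar>g j\<bar>"] F by auto
      next
        case False
        then show ?thesis using g0[of x] by (simp add: sum_nonneg)
      qed
    qed
  qed simp
  have ig: "measure_pmf.expectation p g = (\<Sum>a\<in>F. g a * pmf p a)"
    by (rule integral_measure_pmf_real) (use F g0 in auto)
  have "measure_pmf.expectation p f = measure_pmf.expectation p (\<lambda>x. g x + c)"
    by (simp add: g_def)
  also have "\<dots> = measure_pmf.expectation p g + c"
    using gint by (simp add: integral_add)
  also have "\<dots> = (\<Sum>j\<in>F. pmf p j * f j) + (1 - (\<Sum>j\<in>F. pmf p j)) * c"
    by (simp add: ig g_def algebra_simps sum_subtractf sum_distrib_left sum_distrib_right)
  finally show ?thesis .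
qed

lemma tail_bound:
  "measure_pmf.prob (replicate_pmf n p) {xs. load xs i \<ge> k} \<le> real (n choose k) * pmf p i ^ k"
proof (induction n arbitrary: k)
  case 0
  then show ?case by (cases k) (auto simp: load_def indicator_def)
next
  case (Suc n)
  show ?case
  proof (cases k)
    case 0
    then show ?thesis by simp
  next
    case (Suc j)
    have set_eq: "{xs. x # xs \<in> {xs. load xs i \<ge> k}} = {xs. load xs i \<ge> (if x = i then j else k)}" for x
      by (auto simp: load_Cons Suc)
    have "measure_pmf.prob (replicate_pmf (Suc n) p) {xs. load xs i \<ge> k}
       = measure_pmf.expectation p (\<lambda>x. measure_pmf.prob (replicate_pmf n p) {xs. load xs i \<ge> (if x = i then j else k)})"
      unfolding prob_replicate_Suc set_eq ..
    also have "\<dots> = pmf p i * measure_pmf.prob (replicate_pmf n p) {xs. load xs i \<ge> j}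
        + (1 - pmf p i) * measure_pmf.prob (replicate_pmf n p) {xs. load xs i \<ge> k}"
      by (subst expect_fin[where F="{i}" and c="measure_pmf.prob (replicate_pmf n p) {xs. load xs i \<ge> k}"]) auto
    also have "\<dots> \<le> pmf p i * (real (n choose j) * pmf p i ^ j) + 1 * (real (n choose k) * pmf p i ^ k)"
    proof (rule add_mono)
      show "pmf p i * measure_pmf.prob (replicate_pmf n p) {xs. load xs i \<ge> j} \<le> pmf p i * (real (n choose j) * pmf p i ^ j)"
        using Suc.IH[of j] by (simp add: mult_left_mono)
      show "(1 - pmf p i) * measure_pmf.prob (replicate_pmf n p) {xs. load xs i \<ge> k} \<le> 1 * (real (n choose k) * pmf p i ^ k)"
        using Suc.IH[of k] by (intro mult_mono) (auto simp: pmf_nonneg)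
    qed
    also have "\<dots> = real (Suc n choose k) * pmf p i ^ k"
      by (simp add: Suc algebra_simps)
    finally show ?thesis .
  qed
qed

lemma max_load_ge:
  assumes k: "k \<ge> 1"
  shows "(k \<le> max_load xs) \<longleftrightarrow> (\<exists>i. k \<le> load xs i)"
proof
  assume h: "k \<le> max_load xs"
  have fin: "finite (insert 0 (load xs ` set xs))" by simp
  have "max_load xs \<in> insert 0 (load xs ` set xs)"
    unfolding max_load_def by (rule Max_in[OF fin]) simp
  then show "\<exists>i. k \<le> load xs i" using h k by (auto simp: max_load_def)
next
  assume "\<exists>i. k \<le> load xs i"
  then obtain i where i: "k \<le> load xs i" by blast
  then have "0 < load xs i" using k by simp
  then have "i \<in> set xs" by (auto simp: load_def filter_empty_conv)
  then have "load xs i \<le> max_load xs" unfolding max_load_def by (intro Max_ge) auto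
  then show "k \<le> max_load xs" using i by simp
qed

lemma binom_tail:
  assumes "0 \<le> q" "q \<le> 1"
  shows "measure_pmf.prob (binomial_pmf n q) {k..} = up k q (1 - q) n"
proof -
  have sub: "set_pmf (binomial_pmf n q) \<subseteq> {..n}"
    using assms by (auto simp: set_pmf_binomial_eq split: if_splits)
  have "measure_pmf.prob (binomial_pmf n q) {k..} = measure_pmf.prob (binomial_pmf n q) ({k..} \<inter> set_pmf (binomial_pmf n q))"
    by (simp add: measure_Int_set_pmf)
  also have "{k..} \<inter> set_pmf (binomial_pmf n q) = ({k..} \<inter> {..n}) \<inter> set_pmf (binomial_pmf n q)"
    using sub by auto
  also have "measure_pmf.prob (binomial_pmf n q) \<dots> = measure_pmf.prob (binomial_pmf n q) {l\<in>{..n}. k \<le> l}"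
    by (simp only: measure_Int_set_pmf) (rule arg_cong[where f="measure_pmf.prob (binomial_pmf n q)"], auto)
  also have "\<dots> = (\<Sum>l\<in>{l\<in>{..n}. k \<le> l}. pmf (binomial_pmf n q) l)"
    by (simp add: measure_measure_pmf_finite)
  also have "\<dots> = up k q (1 - q) n"
    unfolding up_def sum.inter_filter[OF finite_atMost, symmetric] using assms by simp
  finally show ?thesis .
qed

theorem mainTheorem11:
  fixes p :: "nat pmf" and n k :: nat
  assumes "set_pmf p \<subseteq> {1..}"
    and "infinite (set_pmf p)"
    and "k \<ge> 1"
  shows "measure_pmf.prob (binomial_pmf n (pnorm p k)) {k..}
           \<le> measure_pmf.prob (replicate_pmf n p) {xs. max_load xs \<ge> k}
      \<and> measure_pmf.prob (replicate_pmf n p) {xs. max_load xs \<ge> k}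
           \<le> real (n choose k) * pnorm p k ^ k"
proof -
  have k: "k \<ge> 1" using assms(3) .
  have k0: "0 < k" using k by simp
  define S where "S = (\<Sum>i. pmf p i ^ k)"
  have psum: "(\<Sum>i<N. pmf p i) \<le> 1" for N
  proof -
    have "(\<Sum>i<N. pmf p i) = measure_pmf.prob p {..<N}" by (simp add: measure_measure_pmf_finite)
    then show ?thesis by simp
  qed
  have pk_le: "pmf p i ^ k \<le> pmf p i" for i
    using power_decreasing[of 1 k "pmf p i"] k by (simp add: pmf_le_1)
  have psumk: "(\<Sum>i<N. pmf p i ^ k) \<le> 1" for N
    using sum_mono[of "{..<N}" "\<lambda>i. pmf p i ^ k" "pmf p", OF pk_le] psum[of N] by linarith
  have summ: "summable (\<lambda>i. pmf p i ^ k)"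
    by (rule summableI_nonneg_bounded[where x=1]) (simp_all add: psumk)
  have S0: "0 \<le> S" unfolding S_def by (intro suminf_nonneg summ) simp
  have S1: "S \<le> 1" unfolding S_def by (rule suminf_le_const[OF summ psumk])
  define q where "q = root k S"
  have pn: "pnorm p k = q" unfolding pnorm_def q_def S_def using root_powr_inverse[OF k0 S0]
    by (simp add: S_def)
  have q0: "0 \<le> q" using S0 by (simp add: q_def real_root_ge_zero)
  have qk: "q ^ k = S" using S0 k0 by (simp add: q_def)
  have q1: "q \<le> 1" by (rule pow_le_base[OF _ _ k]) (use qk S1 in simp_all)
  have ml: "{xs. k \<le> max_load xs} = (\<Union>i. {xs. k \<le> load xs i})"
    using max_load_ge[OF k] by auto
  have summ2: "summable (\<lambda>i. real (n choose k) * pmf p i ^ k)"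
    by (intro summable_mult summ)
  have summ3: "summable (\<lambda>i. measure_pmf.prob (replicate_pmf n p) {xs. k \<le> load xs i})"
    by (rule summable_comparison_test'[OF summ2, where N=0]) (simp add: tail_bound)
  have "measure_pmf.prob (replicate_pmf n p) {xs. max_load xs \<ge> k}
        \<le> (\<Sum>i. measure_pmf.prob (replicate_pmf n p) {xs. k \<le> load xs i})"
    unfolding ml by (rule measure_pmf.finite_measure_subadditive_countably) (simp_all add: summ3)
  also have "\<dots> \<le> (\<Sum>i. real (n choose k) * pmf p i ^ k)"
    by (rule suminf_le[OF _ summ3 summ2]) (simp add: tail_bound)
  also have "\<dots> = real (n choose k) * pnorm p k ^ k"
    using suminf_mult[OF summ, of "real (n choose k)"] by (simp add: pn qk S_def)
  finally have upper: "measure_pmf.prob (replicate_pmf n p) {xs. max_load xs \<ge> k} \<le> real (n choose k) * pnorm p k ^ k" .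
  define f where "f c = (\<Sum>l\<le>n. real (n choose l) * (if l < k then c^l else 0) * (1 - c)^(n-l))" for c :: real
  define cN where "cN N = root k (\<Sum>i<N. pmf p i ^ k)" for N
  define P where "P = measure_pmf.prob (replicate_pmf n p) {xs. \<forall>i. load xs i < k}"
  have fN: "P \<le> f (cN N)" for N
  proof -
    define d where "d = 1 - (\<Sum>i<N. pmf p i)"
    have d0: "0 \<le> d" using psum[of N] by (simp add: d_def)
    have "P \<le> measure_pmf.prob (replicate_pmf n p) {xs. \<forall>i<N. load xs i < k}"
      unfolding P_def by (rule measure_pmf.finite_measure_mono) auto
    also have "\<dots> = fact n * fps_nth (G (pmf p) N (\<lambda>_. k) d) n"
      using prob_G[of n p N "\<lambda>_. k"] by (simp add: d_def)
    also have "\<dots> \<le> fact n * fps_nth (tr k (cN N) * fps_exp (d + (\<Sum>i<N. pmf p i) - cN N)) n"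
      using merge[OF k _ d0, of "pmf p" N n] by (simp add: cN_def)
    also have "d + (\<Sum>i<N. pmf p i) - cN N = 1 - cN N" by (simp add: d_def)
    also have "fact n * fps_nth (tr k (cN N) * fps_exp (1 - cN N)) n = f (cN N)"
      unfolding conv_fact tr_fact exp_fact f_def ..
    finally show ?thesis .
  qed
  have cNlim: "cN \<longlonglongrightarrow> q"
    unfolding cN_def q_def S_def by (intro tendsto_real_root summable_LIMSEQ summ)
  have flim: "(\<lambda>N. f (cN N)) \<longlonglongrightarrow> f q"
  proof -
    have t: "(\<lambda>N. if l < k then cN N ^ l else 0) \<longlonglongrightarrow> (if l < k then q ^ l else 0)" for l
      by (cases "l < k") (auto intro!: tendsto_intros cNlim)
    show ?thesis unfolding f_def
      by (intro tendsto_sum tendsto_mult tendsto_const t tendsto_power tendsto_diff cNlim)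
  qed
  have Pf: "P \<le> f q"
    by (rule LIMSEQ_le_const[OF flim]) (use fN in auto)
  have fq: "f q = 1 - up k q (1 - q) n"
    unfolding f_def lower_eq by simp
  have compl: "{xs. k \<le> max_load xs} = space (measure_pmf (replicate_pmf n p)) - {xs. \<forall>i. load xs i < k}"
    using max_load_ge[OF k] by (auto simp: not_less) (metis leD)
  have "measure_pmf.prob (replicate_pmf n p) {xs. max_load xs \<ge> k} = 1 - P"
    unfolding compl P_def by (rule measure_pmf.prob_compl) simp
  moreover have "measure_pmf.prob (binomial_pmf n (pnorm p k)) {k..} = up k q (1 - q) n"
    unfolding pn by (rule binom_tail[OF q0 q1])
  ultimately have lower: "measure_pmf.prob (binomial_pmf n (pnorm p k)) {k..} \<le> measure_pmf.prob (replicate_pmf n p) {xs. max_load xs \<ge> k}"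
    using Pf fq by simp
  show ?thesis using lower upper by simp
qed

end
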